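(* Let $\theta>0$, $n\ge1$, and let $h$ be a real number with $h\ge\theta n-\tfrac12$. Then for every partition $\lambda$ with $\ell(\lambda)\le n$, $$I_{(2)}(\lambda_1,\dots,\lambda_n;\theta;h)\le\big(I_{(1)}(\lambda_1,\dots,\lambda_n;\theta;h)\big)^2.$$
   Context: Interpolation $BC_n$ polynomials: for a partition $\mu$ with $\ell(\mu)\le n$, $I_\mu(x_1,\dots,x_n;\theta;h)$ is the unique polynomial in $x_1,\dots,x_n$ with coefficients in $\mathbb C(h)$ such that: it has total degree $2|\mu|$ in $x$; it is a symmetric polynomial in the variables $(x_i-\theta i+h)^2$, $i=1,\dots,n$; $I_\mu(\lambda;\theta;h)=0$ for every partition $\lambda$ with $\ell(\lambda)\le n$ whose diagram does not contain that of $\mu$; and $I_\mu(\mu;\theta;h)=\prod_{(i,j)\in\mu}\big(1+\mu_i-j+\theta(\mu'_j-i)\big)\big(2h-1+\mu_i+j-\theta(\mu'_j+i)\big)$. Here $(1)$ and $(2)$ denote the one-row partitions with one and two boxes; explicitly $I_{(1)}(x;\theta;h)=\sum_i\big((x_i+h-\theta i)^2-(h-\theta i)^2\big)$. The evaluation is at a real value of $h$. *)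

theory Defs
  imports "HOL-Computational_Algebra.Polynomial"
begin

text \<open>Partitions are encoded as functions nat => nat indexed from 1;
  "partition_len n lam" means lam is a partition with at most n nonzero parts.\<close>

definition partition_len :: "nat \<Rightarrow> (nat \<Rightarrow> nat) \<Rightarrow> bool" where
  "partition_len n lam \<longleftrightarrow>
     (\<forall>i j. 1 \<le> i \<longrightarrow> i \<le> j \<longrightarrow> lam j \<le> lam i) \<and> (\<forall>i>n. lam i = 0)"

definition diagram :: "(nat \<Rightarrow> nat) \<Rightarrow> (nat \<times> nat) set" where
  "diagram mu = {(i, j). 1 \<le> i \<and> 1 \<le> j \<and> j \<le> mu i}"

definition conj_part :: "(nat \<Rightarrow> nat) \<Rightarrow> nat \<Rightarrow> nat" where
  "conj_part mu j = card {i. 1 \<le> i \<and> j \<le> mu i}"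

definition norm_value :: "(nat \<Rightarrow> nat) \<Rightarrow> real \<Rightarrow> real \<Rightarrow> real" where
  "norm_value mu th h =
     (\<Prod>(i, j)\<in>diagram mu.
        (1 + real (mu i) - real j + th * (real (conj_part mu j) - real i)) *
        (2 * h - 1 + real (mu i) + real j - th * (real (conj_part mu j) + real i)))"

definition row1 :: "nat \<Rightarrow> nat" where "row1 = (\<lambda>i. if i = 1 then 1 else 0)"
definition row2 :: "nat \<Rightarrow> nat" where "row2 = (\<lambda>i. if i = 1 then 2 else 0)"

definition yvar :: "real \<Rightarrow> real \<Rightarrow> (nat \<Rightarrow> real) \<Rightarrow> nat \<Rightarrow> real" where
  "yvar th h x i = (x i - th * real i + h)^2"

definition psum :: "nat \<Rightarrow> nat \<Rightarrow> real \<Rightarrow> real \<Rightarrow> (nat \<Rightarrow> real) \<Rightarrow> real" where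
  "psum k n th h x = (\<Sum>i=1..n. (yvar th h x i) ^ k)"

text \<open>Characterisation of I_(2): F h x is, for each h, a symmetric polynomial of
  degree \<le> 2 in the y_i (i.e. total degree \<le> 4 = 2|(2)| in x), spanned by
  1, p1, p1^2, p2, with coefficients depending polynomially on h; it vanishes at all
  partitions (length \<le> n) not containing (2), and takes the prescribed value at (2).\<close>
definition I2_char :: "nat \<Rightarrow> real \<Rightarrow> (real \<Rightarrow> (nat \<Rightarrow> real) \<Rightarrow> real) \<Rightarrow> bool" where
  "I2_char n th F \<longleftrightarrow>
     (\<exists>a b c d :: real poly. \<forall>h x.
        F h x = poly a h + poly b h * psum 1 n th h x + poly c h * (psum 1 n th h x)^2
                + poly d h * psum 2 n th h x) \<and>
     (\<forall>h lam. partition_len n lam \<longrightarrow> \<not> (diagram row2 \<subseteq> diagram lam) \<longrightarrow>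
        F h (\<lambda>i. real (lam i)) = 0) \<and>
     (\<forall>h. F h (\<lambda>i. real (row2 i)) = norm_value row2 th h)"

definition I2 :: "nat \<Rightarrow> real \<Rightarrow> real \<Rightarrow> (nat \<Rightarrow> real) \<Rightarrow> real" where
  "I2 n th h x = (THE F. I2_char n th F) h x"

definition I1 :: "nat \<Rightarrow> real \<Rightarrow> real \<Rightarrow> (nat \<Rightarrow> real) \<Rightarrow> real" where
  "I1 n th h x = (\<Sum>i=1..n. (x i + h - th * real i)^2 - (h - th * real i)^2)"

end

theory Submission
  imports Defs
begin

definition ww :: "real \<Rightarrow> real \<Rightarrow> nat \<Rightarrow> real" where
  "ww th h i = 2*h + 1 - 2*th*real i"
definition AA :: "real \<Rightarrow> real \<Rightarrow> real" where
  "AA th h = ((ww th h 1)^2 + 2*th*ww th h 1 + 1)/2"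
definition S1 :: "nat \<Rightarrow> real \<Rightarrow> real \<Rightarrow> (nat \<Rightarrow> real) \<Rightarrow> real" where
  "S1 n th h x = psum 1 n th h x - psum 1 n th h (\<lambda>_. 0)"
definition S2 :: "nat \<Rightarrow> real \<Rightarrow> real \<Rightarrow> (nat \<Rightarrow> real) \<Rightarrow> real" where
  "S2 n th h x = psum 2 n th h x - psum 2 n th h (\<lambda>_. 0)"
definition F0 :: "nat \<Rightarrow> real \<Rightarrow> real \<Rightarrow> (nat \<Rightarrow> real) \<Rightarrow> real" where
  "F0 n th h x = (S2 n th h x - AA th h * S1 n th h x + th * (S1 n th h x)^2) / (1+th)"

lemma S_sum: "psum k n th h x - psum k n th h (\<lambda>_. 0) =
   (\<Sum>i=1..n. yvar th h x i ^ k - yvar th h (\<lambda>_. 0) i ^ k)"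
  by (simp add: psum_def sum_subtractf)

lemma I1_S1: "I1 n th h x = S1 n th h x"
  unfolding I1_def S1_def S_sum yvar_def
  by (rule sum.cong) (auto simp: algebra_simps)

lemma alg: "(1::real) + t \<noteq> 0 \<Longrightarrow> (q-Q - A*(p-P) + t*(p-P)^2)/(1+t) = (1/(1+t))*(-Q + A*P + t*P^2) + (1/(1+t))*(-A - 2*t*P) * p + (t/(1+t)) * p^2 + (1/(1+t)) * q"
proof -
  assume "1 + t \<noteq> 0"
  have "(q-Q - A*(p-P) + t*(p-P)^2) = (-Q + A*P + t*P^2) + (-A - 2*t*P) * p + t * p^2 + q"
    by (simp add: algebra_simps power2_eq_square)
  then have "(q-Q - A*(p-P) + t*(p-P)^2)/(1+t) = ((-Q + A*P + t*P^2) + (-A - 2*t*P) * p + t * p^2 + q)/(1+t)" by simp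
  also have "\<dots> = (1/(1+t))*(-Q + A*P + t*P^2) + (1/(1+t))*(-A - 2*t*P) * p + (t/(1+t)) * p^2 + (1/(1+t)) * q"
    by (simp only: add_divide_distrib) (simp add: diff_divide_distrib add_divide_distrib algebra_simps)
  finally show ?thesis .
qed

lemma F0_repr:
  assumes "th > 0"
  shows "\<exists>a b c d :: real poly. \<forall>h x.
        F0 n th h x = poly a h + poly b h * psum 1 n th h x + poly c h * (psum 1 n th h x)^2
                + poly d h * psum 2 n th h x"
proof -
  define P10 where "P10 = (\<Sum>i\<in>{1..n}. [:-(th*real i), 1:]^2)"
  define P20 where "P20 = (\<Sum>i\<in>{1..n}. [:-(th*real i), 1:]^4)"
  define W where "W = [:1-2*th, 2:]"
  define PA where "PA = smult (1/2) (W^2 + smult (2*th) W + 1)"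
  have e1: "poly P10 h = psum 1 n th h (\<lambda>_. 0)" for h
    unfolding P10_def psum_def yvar_def poly_sum by (rule sum.cong) (auto simp: algebra_simps)
  have e2: "poly P20 h = psum 2 n th h (\<lambda>_. 0)" for h
    unfolding P20_def psum_def yvar_def poly_sum by (rule sum.cong) (auto simp: algebra_simps eval_nat_numeral)
  have e3: "poly PA h = AA th h" for h
    unfolding PA_def W_def AA_def ww_def by (simp add: algebra_simps)
  have ne: "1 + th \<noteq> 0" using assms by simp
  show ?thesis
    apply (rule exI[of _ "smult (1/(1+th)) (-P20 + PA*P10 + smult th (P10^2))"])
    apply (rule exI[of _ "smult (1/(1+th)) (-PA - smult (2*th) P10)"])
    apply (rule exI[of _ "[:th/(1+th):]"])
    apply (rule exI[of _ "[:1/(1+th):]"])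
    apply (intro allI)
    apply (simp only: poly_smult poly_add poly_diff poly_minus poly_mult poly_power poly_pCons poly_0 mult_zero_right add_0_right e1 e2 e3 F0_def S1_def S2_def)
    apply (rule alg)
    using ne by simp
qed

lemma S1_closed: "(\<Sum>i=1..k. ww th h i) = real k*(2*h+1) - th*real k*(real k+1)"
  by (induction k) (auto simp: ww_def algebra_simps)

lemma AP: "(\<Sum>i=1..k. ww th h i ^ 3) = ((ww th h 1)^2 + 2*th*ww th h 1) * (\<Sum>i=1..k. ww th h i)
           - 2*th*(\<Sum>i=1..k. ww th h i)^2"
proof (induction k)
  case 0
  then show ?case by simp
next
  case (Suc k)
  have key: "(ww th h (Suc k))^2 = ((ww th h 1)^2 + 2*th*ww th h 1) - 4*th*(\<Sum>i=1..k. ww th h i) - 2*th*ww th h (Suc k)"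
    unfolding S1_closed by (simp add: ww_def algebra_simps power2_eq_square)
  have "(\<Sum>i=1..Suc k. ww th h i ^ 3) = (\<Sum>i=1..k. ww th h i ^ 3) + ww th h (Suc k) ^ 3" by simp
  also have "\<dots> = ((ww th h 1)^2 + 2*th*ww th h 1) * (\<Sum>i=1..k. ww th h i)
           - 2*th*(\<Sum>i=1..k. ww th h i)^2 + ww th h (Suc k) * (ww th h (Suc k))^2"
    using Suc.IH by (simp add: power3_eq_cube power2_eq_square)
  also have "\<dots> = ((ww th h 1)^2 + 2*th*ww th h 1) * ((\<Sum>i=1..k. ww th h i) + ww th h (Suc k))
           - 2*th*((\<Sum>i=1..k. ww th h i) + ww th h (Suc k))^2"
    unfolding key by (simp add: algebra_simps power2_eq_square)
  also have "(\<Sum>i=1..k. ww th h i) + ww th h (Suc k) = (\<Sum>i=1..Suc k. ww th h i)" by simp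
  finally show ?case .
qed

lemma zero_one_prefix:
  fixes n :: nat
  assumes "\<forall>i j. 1 \<le> i \<longrightarrow> i \<le> j \<longrightarrow> lam j \<le> (lam i::nat)" "\<forall>i\<ge>1. lam i \<le> 1"
  shows "\<exists>k\<le>n. \<forall>i\<in>{1..n}. lam i = (if i \<le> k then 1 else 0)"
proof (induction n)
  case 0
  then show ?case by simp
next
  case (Suc n)
  then obtain k where k: "k \<le> n" "\<forall>i\<in>{1..n}. lam i = (if i \<le> k then 1 else 0)" by blast
  show ?case
  proof (cases "lam (Suc n) = 0")
    case True
    then show ?thesis using k by (intro exI[of _ k]) (auto simp: le_Suc_eq)
  next
    case False
    then have "lam (Suc n) = 1" using assms(2) by (metis le_Suc_eq le_add1 le_antisym plus_1_eq_Suc not_less_eq_eq le_0_eq)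
    then have "\<forall>i\<in>{1..Suc n}. lam i = 1" using assms by (metis atLeastAtMost_iff le_antisym)
    then show ?thesis by (intro exI[of _ "Suc n"]) auto
  qed
qed

lemma F0_vanish:
  assumes "partition_len n lam" "lam 1 \<le> 1"
  shows "F0 n th h (\<lambda>i. real (lam i)) = 0"
proof -
  have mono: "\<forall>i j. 1 \<le> i \<longrightarrow> i \<le> j \<longrightarrow> lam j \<le> lam i" using assms(1) by (simp add: partition_len_def)
  have "\<forall>i\<ge>1. lam i \<le> 1" using mono assms(2) by (meson le_trans order_refl)
  then obtain k where k: "k \<le> n" "\<forall>i\<in>{1..n}. lam i = (if i \<le> k then 1 else 0)"
    using zero_one_prefix[OF mono] by blast
  have int: "{1..n} \<inter> {i. i \<le> k} = {1..k}" using k(1) by auto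
  have s1: "S1 n th h (\<lambda>i. real (lam i)) = (\<Sum>i=1..k. ww th h i)"
  proof -
    have "S1 n th h (\<lambda>i. real (lam i)) = (\<Sum>i\<in>{1..n}. if i \<in> {i. i \<le> k} then ww th h i else 0)"
      unfolding S1_def S_sum by (rule sum.cong) (auto simp: k yvar_def ww_def algebra_simps power2_eq_square)
    also have "\<dots> = (\<Sum>i=1..k. ww th h i)" by (simp only: sum.inter_restrict[symmetric] finite_atLeastAtMost int)
    finally show ?thesis .
  qed
  have s2: "S2 n th h (\<lambda>i. real (lam i)) = ((\<Sum>i=1..k. ww th h i ^ 3) + (\<Sum>i=1..k. ww th h i))/2"
  proof -
    have "S2 n th h (\<lambda>i. real (lam i)) = (\<Sum>i\<in>{1..n}. if i \<in> {i. i \<le> k} then (ww th h i ^ 3 + ww th h i)/2 else 0)"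
      unfolding S2_def S_sum by (rule sum.cong) (auto simp: k yvar_def ww_def field_simps power2_eq_square power3_eq_cube)
    also have "\<dots> = (\<Sum>i=1..k. (ww th h i ^ 3 + ww th h i)/2)" by (simp only: sum.inter_restrict[symmetric] finite_atLeastAtMost int)
    finally show ?thesis by (simp only: sum_divide_distrib[symmetric] sum.distrib)
  qed
  show ?thesis unfolding F0_def s1 s2 AP AA_def by (simp add: field_simps power2_eq_square)
qed

lemma sum_one:
  fixes n :: nat
  assumes "n \<ge> 1" "\<forall>i\<in>{1..n}. i \<noteq> 1 \<longrightarrow> f i = (0::real)"
  shows "(\<Sum>i=1..n. f i) = f 1"
proof -
  have "(\<Sum>i=1..n. f i) = f 1 + (\<Sum>i\<in>{1..n}-{1}. f i)"
    using assms(1) by (subst sum.remove[of _ 1]) auto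
  also have "(\<Sum>i\<in>{1..n}-{1}. f i) = 0" using assms(2) by (intro sum.neutral) auto
  finally show ?thesis by simp
qed

lemma sum_two:
  fixes n :: nat
  assumes "n \<ge> 2" "\<forall>i\<in>{1..n}. i \<noteq> 1 \<longrightarrow> i \<noteq> 2 \<longrightarrow> f i = (0::real)"
  shows "(\<Sum>i=1..n. f i) = f 1 + f 2"
proof -
  have "(\<Sum>i=1..n. f i) = f 1 + (\<Sum>i\<in>{1..n}-{1}. f i)"
    using assms(1) by (subst sum.remove[of _ 1]) auto
  also have "(\<Sum>i\<in>{1..n}-{1}. f i) = f 2 + (\<Sum>i\<in>{1..n}-{1}-{2}. f i)"
    using assms(1) by (subst sum.remove[of _ 2]) auto
  also have "(\<Sum>i\<in>{1..n}-{1}-{2}. f i) = 0" using assms(2) by (intro sum.neutral) auto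
  finally show ?thesis by simp
qed

lemma row2_S1: "n \<ge> 1 \<Longrightarrow> S1 n th h (\<lambda>i. real (row2 i)) = 2*(ww th h 1 + 1)"
  unfolding S1_def S_sum
  by (subst sum_one) (auto simp: row2_def yvar_def ww_def algebra_simps power2_eq_square)

lemma row2_S2: "n \<ge> 1 \<Longrightarrow> S2 n th h (\<lambda>i. real (row2 i)) = (ww th h 1 + 1)*((ww th h 1)^2 + 2*ww th h 1 + 5)"
  unfolding S2_def S_sum
  by (subst sum_one) (auto simp: row2_def yvar_def ww_def algebra_simps power2_eq_square)

lemma row1_S1: "n \<ge> 1 \<Longrightarrow> S1 n th h (\<lambda>i. real (row1 i)) = ww th h 1"
  unfolding S1_def S_sum
  by (subst sum_one) (auto simp: row1_def yvar_def ww_def algebra_simps power2_eq_square)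

lemma row1_S2: "n \<ge> 1 \<Longrightarrow> S2 n th h (\<lambda>i. real (row1 i)) = ww th h 1 * ((ww th h 1)^2 + 1)/2"
  unfolding S2_def S_sum
  by (subst sum_one) (auto simp: row1_def yvar_def ww_def field_simps power2_eq_square)

definition row11 :: "nat \<Rightarrow> nat" where "row11 = (\<lambda>i. if i = 1 \<or> i = 2 then 1 else 0)"

lemma row11_S1: "n \<ge> 2 \<Longrightarrow> S1 n th h (\<lambda>i. real (row11 i)) = ww th h 1 + ww th h 2"
  unfolding S1_def S_sum
  by (subst sum_two) (auto simp: row11_def yvar_def ww_def algebra_simps power2_eq_square)

lemma row11_S2: "n \<ge> 2 \<Longrightarrow> S2 n th h (\<lambda>i. real (row11 i)) = (ww th h 1 * ((ww th h 1)^2 + 1) + ww th h 2 * ((ww th h 2)^2 + 1))/2"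
  unfolding S2_def S_sum
  by (subst sum_two) (auto simp: row11_def yvar_def ww_def field_simps power2_eq_square)

lemma norm_row2: "norm_value row2 th h = 2*(ww th h 1 + 1)*(ww th h 1 + 2)"
proof -
  have d: "diagram row2 = {(1,1),(1,2)}" by (auto simp: diagram_def row2_def split: if_splits)
  have c1: "conj_part row2 1 = 1"
  proof -
    have "{i. 1 \<le> i \<and> 1 \<le> row2 i} = {1}" by (auto simp: row2_def)
    then show ?thesis by (simp add: conj_part_def)
  qed
  have c2: "conj_part row2 2 = 1"
  proof -
    have "{i. 1 \<le> i \<and> 2 \<le> row2 i} = {1}" by (auto simp: row2_def)
    then show ?thesis by (simp add: conj_part_def)
  qed
  show ?thesis unfolding norm_value_def d using c1 c2
    by (simp add: row2_def ww_def algebra_simps)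
qed

lemma F0_row2: "n \<ge> 1 \<Longrightarrow> th > 0 \<Longrightarrow> F0 n th h (\<lambda>i. real (row2 i)) = norm_value row2 th h"
  unfolding F0_def norm_row2 row2_S1 row2_S2 AA_def
  by (simp add: field_simps power2_eq_square)

lemma F0_char:
  assumes "th > 0" "n \<ge> 1"
  shows "I2_char n th (F0 n th)"
  unfolding I2_char_def
proof (intro conjI allI impI)
  show "\<exists>a b c d :: real poly. \<forall>h x.
        F0 n th h x = poly a h + poly b h * psum 1 n th h x + poly c h * (psum 1 n th h x)^2
                + poly d h * psum 2 n th h x" using F0_repr[OF assms(1)] .
next
  fix h lam assume p: "partition_len n lam" and nd: "\<not> diagram row2 \<subseteq> diagram lam"
  have "lam 1 \<le> 1"
  proof (rule ccontr)
    assume "\<not> lam 1 \<le> 1"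
    then have "diagram row2 \<subseteq> diagram lam" by (auto simp: diagram_def row2_def split: if_splits)
    with nd show False by simp
  qed
  then show "F0 n th h (\<lambda>i. real (lam i)) = 0" using F0_vanish[OF p] by simp
next
  fix h show "F0 n th h (\<lambda>i. real (row2 i)) = norm_value row2 th h" using F0_row2 assms by simp
qed

lemma cont_zero:
  fixes f :: "real \<Rightarrow> real"
  assumes "finite S" "\<And>t. isCont f t" "\<forall>t. t \<notin> S \<longrightarrow> f t = 0"
  shows "f h0 = 0"
proof -
  have 1: "(f \<longlongrightarrow> f h0) (at h0)" using assms(2) by (simp add: isCont_def)
  have ev: "eventually (\<lambda>t. \<forall>s\<in>S. t \<noteq> s) (at h0)"
    using assms(1) by (intro eventually_ball_finite) (auto intro: eventually_neq_at_within)
  have "eventually (\<lambda>t. f t = 0) (at h0)" using ev by eventually_elim (use assms(3) in auto)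
  then have 2: "(f \<longlongrightarrow> 0) (at h0)" by (rule tendsto_eventually)
  show ?thesis using tendsto_unique[OF _ 1 2] by simp
qed

lemma psum_one: "psum k (Suc 0) th h x = yvar th h x 1 ^ k"
  by (simp add: psum_def)

lemma uniq_h:
  assumes n1: "n \<ge> 1" and th: "th > 0"
    and nz: "ww th h 1 \<noteq> 0" "ww th h 2 \<noteq> 0" "ww th h 1 + ww th h 2 \<noteq> 0"
       "ww th h 1 + 1 \<noteq> 0" "ww th h 1 + 2 \<noteq> 0"
    and D: "\<And>x. D x = al + be * psum 1 n th h x + ga * (psum 1 n th h x)^2 + de * psum 2 n th h x"
    and z0: "D (\<lambda>_. 0) = 0" and z1: "D (\<lambda>i. real (row1 i)) = 0"
    and z2: "D (\<lambda>i. real (row2 i)) = 0"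
    and z11: "n \<ge> 2 \<Longrightarrow> D (\<lambda>i. real (row11 i)) = 0"
  shows "D x = 0"
proof (cases "n \<ge> 2")
  case True
  define P1 where "P1 = psum 1 n th h (\<lambda>_. 0)"
  define P2 where "P2 = psum 2 n th h (\<lambda>_. 0)"
  define a' where "a' = al + be * P1 + ga * P1^2 + de * P2"
  define b' where "b' = be + 2 * ga * P1"
  have D': "D y = a' + b' * S1 n th h y + ga * (S1 n th h y)^2 + de * S2 n th h y" for y
    unfolding D a'_def b'_def S1_def S2_def P1_def P2_def by (simp add: algebra_simps power2_eq_square)
  have a0: "a' = 0" using z0 D'[of "\<lambda>_. 0"] by (simp add: S1_def S2_def)
  define w where "w = ww th h 1"
  define v where "v = ww th h 2"
  define A where "A = AA th h"
  have vw: "v = w - 2*th" unfolding v_def w_def ww_def by simp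
  have Aw: "A = (w^2 + 2*th*w + 1)/2" unfolding A_def AA_def w_def by simp
  have E1: "b' * w + ga * w^2 + de * (w * (w^2 + 1)/2) = 0"
    using z1 D'[of "\<lambda>i. real (row1 i)"] a0 row1_S1[OF n1] row1_S2[OF n1] unfolding w_def by simp
  have E2: "b' * (w+v) + ga * (w+v)^2 + de * ((w * (w^2 + 1) + v * (v^2+1))/2) = 0"
    using z11[OF True] D'[of "\<lambda>i. real (row11 i)"] a0 row11_S1[OF True] row11_S2[OF True]
    unfolding w_def v_def by simp
  have E3: "b' * (2*(w+1)) + ga * (2*(w+1))^2 + de * ((w+1)*(w^2+2*w+5)) = 0"
    using z2 D'[of "\<lambda>i. real (row2 i)"] a0 row2_S1[OF n1] row2_S2[OF n1] unfolding w_def by simp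
  define B where "B = b' + de * A"
  define C where "C = ga - th * de"
  have e1: "w * (B + C * w) = 0" using E1 unfolding B_def C_def Aw by (simp add: field_simps power2_eq_square power3_eq_cube)
  have e2: "(w+v) * (B + C * (w+v)) = 0" using E2 unfolding B_def C_def Aw vw by (simp add: field_simps power2_eq_square power3_eq_cube)
  have f1: "B + C * w = 0" using e1 nz(1) unfolding w_def by simp
  have f2: "B + C * (w+v) = 0" using e2 nz(3) unfolding w_def v_def by simp
  have "C * v = (B + C*(w+v)) - (B + C*w)" by (simp add: algebra_simps)
  then have "C * v = 0" using f1 f2 by simp
  then have C0: "C = 0" using nz(2) unfolding v_def by simp
  then have B0: "B = 0" using f1 by simp
  have "de * (2*(1+th)*(w+1)*(w+2)) = 0"
  proof -
    have bb: "b' = - de * A" and gg: "ga = th * de" using B0 C0 unfolding B_def C_def by simp_all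
    have E3': "(- de * A) * (2*(w+1)) + (th * de) * (2*(w+1))^2 + de * ((w+1)*(w^2+2*w+5)) = 0"
      using E3 unfolding bb gg .
    have "de * (2*(1+th)*(w+1)*(w+2)) = (- de * A) * (2*(w+1)) + (th * de) * (2*(w+1))^2 + de * ((w+1)*(w^2+2*w+5))"
      unfolding Aw by (simp add: field_simps power2_eq_square)
    then show ?thesis using E3' by simp
  qed
  moreover have "2*(1+th)*(w+1)*(w+2) \<noteq> 0" using th nz(4,5) unfolding w_def by simp
  ultimately have d0: "de = 0" by simp
  then have "ga = 0" "b' = 0" using B0 C0 unfolding B_def C_def by simp_all
  then show ?thesis using D' a0 d0 by simp
next
  case False
  then have n: "n = Suc 0" using n1 by simp
  define C where "C = ga + de"
  have D': "D y = al + be * yvar th h y 1 + C * (yvar th h y 1)^2" for y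
    unfolding D n psum_one C_def by (simp add: algebra_simps power2_eq_square)
  define u where "u = h - th"
  have y0: "yvar th h (\<lambda>_. 0) 1 = u^2" unfolding yvar_def u_def by simp
  have y1: "yvar th h (\<lambda>i. real (row1 i)) 1 = (u+1)^2" unfolding yvar_def u_def row1_def by (simp add: algebra_simps)
  have y2: "yvar th h (\<lambda>i. real (row2 i)) 1 = (u+2)^2" unfolding yvar_def u_def row2_def by (simp add: algebra_simps)
  have E0: "al + be * u^2 + C * (u^2)^2 = 0" using z0 D' y0 by metis
  have E1: "al + be * (u+1)^2 + C * ((u+1)^2)^2 = 0" using z1 D' y1 by metis
  have E2: "al + be * (u+2)^2 + C * ((u+2)^2)^2 = 0" using z2 D' y2 by metis
  have q1: "(2*u+1) * (be + C * (u^2 + (u+1)^2)) = 0" using E0 E1 by (simp add: algebra_simps power2_eq_square) 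
  have q2: "(2*u+3) * (be + C * ((u+1)^2 + (u+2)^2)) = 0" using E1 E2 by (simp add: algebra_simps power2_eq_square)
  have nz1: "2*u+1 \<noteq> 0" using nz(1) unfolding u_def ww_def by simp
  have nz2: "2*u+3 \<noteq> 0" using nz(5) unfolding u_def ww_def by simp
  have nz3: "u + 1 \<noteq> 0" using nz(4) unfolding u_def ww_def by simp
  have r1: "be + C * (u^2 + (u+1)^2) = 0" using q1 nz1 by simp
  have r2: "be + C * ((u+1)^2 + (u+2)^2) = 0" using q2 nz2 by simp
  have "C * (4*(u+1)) = (be + C * ((u+1)^2 + (u+2)^2)) - (be + C * (u^2 + (u+1)^2))" by (simp add: algebra_simps power2_eq_square)
  then have "C * (4*(u+1)) = 0" using r1 r2 by simp
  then have C0: "C = 0" using nz3 by simp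
  then have "be = 0" using r1 by simp
  then have "al = 0" using E0 C0 by simp
  then show ?thesis using D' C0 \<open>be = 0\<close> by simp
qed

lemma part_row1: "n \<ge> 1 \<Longrightarrow> partition_len n row1"
  by (auto simp: partition_len_def row1_def)
lemma part_row11: "n \<ge> 2 \<Longrightarrow> partition_len n row11"
  by (auto simp: partition_len_def row11_def)
lemma part_zero: "partition_len n (\<lambda>_. 0)"
  by (auto simp: partition_len_def)
lemma nd_le1: "lam 1 \<le> 1 \<Longrightarrow> \<not> diagram row2 \<subseteq> diagram lam"
  by (auto simp: diagram_def row2_def subset_iff)

lemma char_zero_points:
  assumes "I2_char n th G" "n \<ge> 1"
  shows "G h (\<lambda>_. 0) = 0" "G h (\<lambda>i. real (row1 i)) = 0"
    "n \<ge> 2 \<Longrightarrow> G h (\<lambda>i. real (row11 i)) = 0"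
    "G h (\<lambda>i. real (row2 i)) = norm_value row2 th h"
proof -
  have v: "\<And>lam. partition_len n lam \<Longrightarrow> lam 1 \<le> 1 \<Longrightarrow> G h (\<lambda>i. real (lam i)) = 0"
    using assms(1) nd_le1 unfolding I2_char_def by blast
  show "G h (\<lambda>_. 0) = 0" using v[OF part_zero] by simp
  show "G h (\<lambda>i. real (row1 i)) = 0" using v[OF part_row1[OF assms(2)]] by (simp add: row1_def)
  show "n \<ge> 2 \<Longrightarrow> G h (\<lambda>i. real (row11 i)) = 0" using v[OF part_row11] by (simp add: row11_def)
  show "G h (\<lambda>i. real (row2 i)) = norm_value row2 th h" using assms(1) unfolding I2_char_def by blast
qed

lemma I2_eq:
  assumes th: "th > 0" and n1: "n \<ge> 1"
  shows "I2 n th h x = F0 n th h x"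
proof -
  have "(THE F. I2_char n th F) = F0 n th"
  proof (rule the_equality[where P="I2_char n th", OF F0_char[OF th n1]])
    fix G assume G: "I2_char n th G"
    obtain a b c d :: "real poly" where Ga: "\<And>h x.
        G h x = poly a h + poly b h * psum 1 n th h x + poly c h * (psum 1 n th h x)^2
                + poly d h * psum 2 n th h x" using G unfolding I2_char_def by blast
    obtain a0 b0 c0 d0 :: "real poly" where Fa: "\<And>h x.
        F0 n th h x = poly a0 h + poly b0 h * psum 1 n th h x + poly c0 h * (psum 1 n th h x)^2
                + poly d0 h * psum 2 n th h x" using F0_repr[OF th] by blast
    have F: "I2_char n th (F0 n th)" by (rule F0_char[OF th n1])
    define S where "S = {(2*th-1)/2, (4*th-1)/2, (6*th-2)/4, (2*th-2)/2, (2*th-3)/2}"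
    have finS: "finite S" unfolding S_def by simp
    have D: "G h y - F0 n th h y = (poly a h - poly a0 h) + (poly b h - poly b0 h) * psum 1 n th h y
       + (poly c h - poly c0 h) * (psum 1 n th h y)^2 + (poly d h - poly d0 h) * psum 2 n th h y" for h y
      unfolding Ga Fa by (simp add: algebra_simps)
    have zero_h: "G h y - F0 n th h y = 0" if hS: "h \<notin> S" for h y
    proof (rule uniq_h[OF n1 th, where D = "\<lambda>y. G h y - F0 n th h y"])
      show "ww th h 1 \<noteq> 0" "ww th h 2 \<noteq> 0" "ww th h 1 + ww th h 2 \<noteq> 0"
       "ww th h 1 + 1 \<noteq> 0" "ww th h 1 + 2 \<noteq> 0"
        using hS unfolding S_def ww_def by (auto simp: field_simps)
      show "\<And>y. G h y - F0 n th h y = (poly a h - poly a0 h) + (poly b h - poly b0 h) * psum 1 n th h y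
       + (poly c h - poly c0 h) * (psum 1 n th h y)^2 + (poly d h - poly d0 h) * psum 2 n th h y" by (rule D)
      show "G h (\<lambda>_. 0) - F0 n th h (\<lambda>_. 0) = 0"
        using char_zero_points[OF G n1] char_zero_points[OF F n1] by simp
      show "G h (\<lambda>i. real (row1 i)) - F0 n th h (\<lambda>i. real (row1 i)) = 0"
        using char_zero_points[OF G n1] char_zero_points[OF F n1] by simp
      show "G h (\<lambda>i. real (row2 i)) - F0 n th h (\<lambda>i. real (row2 i)) = 0"
        using char_zero_points[OF G n1] char_zero_points[OF F n1] by simp
      show "n \<ge> 2 \<Longrightarrow> G h (\<lambda>i. real (row11 i)) - F0 n th h (\<lambda>i. real (row11 i)) = 0"
        using char_zero_points[OF G n1] char_zero_points[OF F n1] by simp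
    qed
    show "G = F0 n th"
    proof (intro ext)
      fix h y
      have "(\<lambda>t. G t y - F0 n th t y) h = 0"
      proof (rule cont_zero[OF finS, where f="\<lambda>t. G t y - F0 n th t y"])
        show "\<And>t. isCont (\<lambda>t. G t y - F0 n th t y) t"
          unfolding D psum_def yvar_def by (intro continuous_intros)
        show "\<forall>t. t \<notin> S \<longrightarrow> G t y - F0 n th t y = 0" using zero_h by blast
      qed
      then show "G h y = F0 n th h y" by simp
    qed
  qed
  then show ?thesis unfolding I2_def by simp
qed

lemma sumsq_le:
  fixes d :: "nat \<Rightarrow> real"
  assumes "finite I" "\<forall>i\<in>I. d i \<ge> 0"
  shows "(\<Sum>i\<in>I. d i ^ 2) \<le> (\<Sum>i\<in>I. d i) ^ 2"
proof -
  have "(\<Sum>i\<in>I. d i ^ 2) \<le> (\<Sum>i\<in>I. d i * (\<Sum>j\<in>I. d j))"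
  proof (rule sum_mono)
    fix i assume i: "i \<in> I"
    have "d i \<le> (\<Sum>j\<in>I. d j)" using member_le_sum[OF i] assms by auto
    then show "d i ^ 2 \<le> d i * (\<Sum>j\<in>I. d j)" using assms i
      by (simp add: power2_eq_square mult_left_mono)
  qed
  also have "\<dots> = (\<Sum>i\<in>I. d i) ^ 2" by (simp add: sum_distrib_right power2_eq_square)
  finally show ?thesis .
qed

theorem lemma4p1:
  fixes th h :: real and n :: nat and lam :: "nat \<Rightarrow> nat"
  assumes "th > 0" and "n \<ge> 1" and "h \<ge> th * real n - 1/2"
    and "partition_len n lam"
  shows "I2 n th h (\<lambda>i. real (lam i)) \<le> (I1 n th h (\<lambda>i. real (lam i)))^2"
proof -
  define x where "x = (\<lambda>i. real (lam i))"
  define d where "d i = yvar th h x i - yvar th h (\<lambda>_. 0) i" for i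
  define u where "u i = h - th * real i" for i
  define A where "A = AA th h"
  have s1: "S1 n th h x = (\<Sum>i=1..n. d i)" unfolding S1_def S_sum d_def by simp
  have s2: "S2 n th h x = (\<Sum>i=1..n. d i ^ 2 + 2 * (u i)^2 * d i)"
    unfolding S2_def S_sum d_def u_def yvar_def by (rule sum.cong) (auto simp: algebra_simps power2_eq_square)
  have dpos: "\<forall>i\<in>{1..n}. d i \<ge> 0"
  proof
    fix i assume i: "i \<in> {1..n}"
    have "th * real i \<le> th * real n" using i assms(1) by (simp add: mult_left_mono)
    then have ui: "2 * u i \<ge> -1" unfolding u_def using assms(3) by simp
    have dd: "d i = real (lam i) * (real (lam i) + 2 * u i)"
      unfolding d_def x_def yvar_def u_def by (simp add: algebra_simps power2_eq_square)
    show "d i \<ge> 0"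
    proof (cases "lam i = 0")
      case True then show ?thesis unfolding dd by simp
    next
      case False then have "real (lam i) \<ge> 1" by simp
      then show ?thesis unfolding dd using ui by simp
    qed
  qed
  have ule: "\<forall>i\<in>{1..n}. 2 * (u i)^2 \<le> A"
  proof
    fix i assume i: "i \<in> {1..n}"
    have "th * real i \<le> th * real n" using i assms(1) by (simp add: mult_left_mono)
    then have ui: "2 * u i \<ge> -1" unfolding u_def using assms(3) by simp
    have "th * 1 \<le> th * real i" using i assms(1) by (simp add: mult_left_mono)
    then have uu: "u i \<le> u 1" unfolding u_def by simp
    define w where "w = 2 * u 1 + 1"
    have Aw: "A = (w^2 + 2*th*w + 1)/2" unfolding A_def AA_def w_def ww_def u_def by (simp add: algebra_simps power2_eq_square)
    have w0: "w \<ge> 0" unfolding w_def using ui uu by simp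
    have "4 * (u i)^2 \<le> w^2 + 2*th*w + 1"
    proof (cases "u i \<ge> 0")
      case True
      have "(u i)^2 \<le> (u 1)^2" using True uu by (simp add: power_mono)
      moreover have "4 * (u 1)^2 = w^2 - 2*w + 1" unfolding w_def by (simp add: algebra_simps power2_eq_square)
      moreover have "0 \<le> 2*th*w + 2*w" using w0 assms(1) by simp
      ultimately show ?thesis by simp
    next
      case False
      then have "(-2 * u i)^2 \<le> 1" using ui by (intro power_le_one) auto
      then have "4 * (u i)^2 \<le> 1" by (simp add: power2_eq_square)
      moreover have "0 \<le> w^2 + 2*th*w" using w0 assms(1) by simp
      ultimately show ?thesis by simp
    qed
    then show "2 * (u i)^2 \<le> A" unfolding Aw by simp
  qed
  have key: "S2 n th h x - A * S1 n th h x \<le> (S1 n th h x)^2"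
  proof -
    have "S2 n th h x - A * S1 n th h x = (\<Sum>i=1..n. d i ^ 2 + (2 * (u i)^2 - A) * d i)"
      unfolding s1 s2 sum_distrib_left sum_subtractf[symmetric] by (rule sum.cong) (auto simp: algebra_simps)
    also have "\<dots> \<le> (\<Sum>i=1..n. d i ^ 2)"
    proof (rule sum_mono)
      fix i assume "i \<in> {1..n}"
      then have "(2 * (u i)^2 - A) * d i \<le> 0" using dpos ule by (simp add: mult_nonpos_nonneg)
      then show "d i ^ 2 + (2 * (u i)^2 - A) * d i \<le> d i ^ 2" by simp
    qed
    also have "\<dots> \<le> (S1 n th h x)^2" unfolding s1 by (rule sumsq_le) (use dpos in auto)
    finally show ?thesis .
  qed
  have "F0 n th h x \<le> (S1 n th h x)^2"
  proof -
    have "F0 n th h x = (S2 n th h x - A * S1 n th h x + th * (S1 n th h x)^2) / (1 + th)"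
      unfolding F0_def A_def ..
    also have "\<dots> \<le> ((S1 n th h x)^2 + th * (S1 n th h x)^2) / (1 + th)"
      using key assms(1) by (intro divide_right_mono) auto
    also have "\<dots> = (S1 n th h x)^2" using assms(1) by (simp add: field_simps)
    finally show ?thesis .
  qed
  then show ?thesis unfolding I2_eq[OF assms(1,2)] I1_S1 x_def .
qed

end
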